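(* For every integer $n\ge 2$, the friendship graph $F_n$ is not $\mathcal{D}$-unique. Specifically, let $H_n$ be the graph on vertices $u,a_1,\dots,a_n,b_1,\dots,b_n$ with edges $ua_i$, $ub_i$, $a_ib_i$ for $1\le i\le n$, and $b_ib_j$ for all $1\le i<j\le n$ (this is $B_n/v$, the contraction of the book graph $B_n$ at an endpoint $v$ of its common edge). Then $H_n$ is not isomorphic to $F_n$, but $D(H_n,x)=D(F_n,x)=(2x+x^2)^n+x(1+x)^{2n}$. *)

theory Defs
  imports Main "HOL-Computational_Algebra.Polynomial"
begin

definition simple_graph :: "'a set \<Rightarrow> 'a set set \<Rightarrow> bool" where
  "simple_graph V E \<longleftrightarrow> finite V \<and> (\<forall>e\<in>E. e \<subseteq> V \<and> card e = 2)"

definition dominating_set :: "'a set \<Rightarrow> 'a set set \<Rightarrow> 'a set \<Rightarrow> bool" where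
  "dominating_set V E S \<longleftrightarrow> S \<subseteq> V \<and> (\<forall>v\<in>V. v \<in> S \<or> (\<exists>w\<in>S. {v, w} \<in> E))"

definition dom_poly :: "'a set \<Rightarrow> 'a set set \<Rightarrow> int poly" where
  "dom_poly V E = (\<Sum>S\<in>{S. dominating_set V E S}. monom 1 (card S))"

definition graph_iso :: "'a set \<Rightarrow> 'a set set \<Rightarrow> 'b set \<Rightarrow> 'b set set \<Rightarrow> bool" where
  "graph_iso V1 E1 V2 E2 \<longleftrightarrow>
     (\<exists>f. bij_betw f V1 V2 \<and> (\<forall>x\<in>V1. \<forall>y\<in>V1. {x, y} \<in> E1 \<longleftrightarrow> {f x, f y} \<in> E2))"

datatype vtx = U | A nat | B nat

definition FH_verts :: "nat \<Rightarrow> vtx set" where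
  "FH_verts n = {U} \<union> A ` {1..n} \<union> B ` {1..n}"

definition F_edges :: "nat \<Rightarrow> vtx set set" where
  "F_edges n = (\<Union>i\<in>{1..n}. {{U, A i}, {U, B i}, {A i, B i}})"

definition H_edges :: "nat \<Rightarrow> vtx set set" where
  "H_edges n = F_edges n \<union> {{B i, B j} | i j. 1 \<le> i \<and> i < j \<and> j \<le> n}"

end

theory Submission
  imports Defs
begin

definition W :: "nat \<Rightarrow> vtx set" where "W n = A ` {1..n} \<union> B ` {1..n}"

definition Good :: "nat \<Rightarrow> vtx set set" where
  "Good n = {T. T \<subseteq> W n \<and> (\<forall>i\<in>{1..n}. A i \<in> T \<or> B i \<in> T)}"

lemma F_edge_iff: "{v,w} \<in> F_edges n \<longleftrightarrow> (\<exists>i\<in>{1..n}. (v=U \<and> w = A i) \<or> (v = A i \<and> w = U)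
   \<or> (v=U \<and> w = B i) \<or> (v = B i \<and> w = U) \<or> (v=A i \<and> w = B i) \<or> (v = B i \<and> w = A i))"
  by (auto simp: F_edges_def doubleton_eq_iff)

lemma H_edge_iff: "{v,w} \<in> H_edges n \<longleftrightarrow> {v,w} \<in> F_edges n \<or>
   (\<exists>i j. 1 \<le> i \<and> i < j \<and> j \<le> n \<and> ((v = B i \<and> w = B j) \<or> (v = B j \<and> w = B i)))"
  by (auto simp: H_edges_def doubleton_eq_iff)

lemma verts: "FH_verts n = insert U (W n)" "U \<notin> W n"
  by (auto simp: FH_verts_def W_def)

lemma dom_F: assumes "n \<ge> 1"
  shows "dominating_set (FH_verts n) (F_edges n) S \<longleftrightarrow>
     S \<subseteq> FH_verts n \<and> (U \<in> S \<or> (\<forall>i\<in>{1..n}. A i \<in> S \<or> B i \<in> S))"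
proof
  assume d: "dominating_set (FH_verts n) (F_edges n) S"
  show "S \<subseteq> FH_verts n \<and> (U \<in> S \<or> (\<forall>i\<in>{1..n}. A i \<in> S \<or> B i \<in> S))"
  proof (cases "U \<in> S")
    case False
    have "A i \<in> S \<or> B i \<in> S" if i: "i \<in> {1..n}" for i
    proof -
      have "A i \<in> FH_verts n" using i by (auto simp: FH_verts_def)
      with d obtain w where "A i \<in> S \<or> (w \<in> S \<and> {A i, w} \<in> F_edges n)"
        unfolding dominating_set_def by blast
      then show ?thesis using False by (auto simp: F_edge_iff)
    qed
    then show ?thesis using d by (auto simp: dominating_set_def)
  qed (use d in \<open>auto simp: dominating_set_def\<close>)
next
  assume h: "S \<subseteq> FH_verts n \<and> (U \<in> S \<or> (\<forall>i\<in>{1..n}. A i \<in> S \<or> B i \<in> S))"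
  show "dominating_set (FH_verts n) (F_edges n) S"
    unfolding dominating_set_def
  proof (intro conjI ballI)
    show "S \<subseteq> FH_verts n" using h by blast
    fix v assume v: "v \<in> FH_verts n"
    show "v \<in> S \<or> (\<exists>w\<in>S. {v, w} \<in> F_edges n)"
    proof (cases "U \<in> S")
      case True
      then show ?thesis using v by (auto simp: FH_verts_def F_edge_iff)
    next
      case False
      then have all: "\<forall>i\<in>{1..n}. A i \<in> S \<or> B i \<in> S" using h by blast
      show ?thesis
      proof (cases v)
        case U
        have "1 \<in> {1..n}" using assms by auto
        then have "A 1 \<in> S \<or> B 1 \<in> S" using all by blast
        moreover have "{U, A 1} \<in> F_edges n" "{U, B 1} \<in> F_edges n"
          using \<open>1 \<in> {1..n}\<close> unfolding F_edge_iff by blast+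
        ultimately show ?thesis using U by blast
      next
        case (A i)
        then have i: "i \<in> {1..n}" using v by (auto simp: FH_verts_def)
        then have "A i \<in> S \<or> B i \<in> S" using all by blast
        moreover have "{A i, B i} \<in> F_edges n"
          using i unfolding F_edge_iff by blast
        ultimately show ?thesis using A by blast
      next
        case (B i)
        then have i: "i \<in> {1..n}" using v by (auto simp: FH_verts_def)
        then have "A i \<in> S \<or> B i \<in> S" using all by blast
        moreover have "{B i, A i} \<in> F_edges n"
          using i unfolding F_edge_iff by blast
        ultimately show ?thesis using B by blast
      qed
    qed
  qed
qed

lemma dom_H: assumes "n \<ge> 1"
  shows "dominating_set (FH_verts n) (H_edges n) S \<longleftrightarrow> dominating_set (FH_verts n) (F_edges n) S"
proof
  assume d: "dominating_set (FH_verts n) (H_edges n) S"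
  have "S \<subseteq> FH_verts n \<and> (U \<in> S \<or> (\<forall>i\<in>{1..n}. A i \<in> S \<or> B i \<in> S))"
  proof (cases "U \<in> S")
    case False
    have "A i \<in> S \<or> B i \<in> S" if i: "i \<in> {1..n}" for i
    proof -
      have "A i \<in> FH_verts n" using i by (auto simp: FH_verts_def)
      with d obtain w where "A i \<in> S \<or> (w \<in> S \<and> {A i, w} \<in> H_edges n)"
        unfolding dominating_set_def by blast
      then show ?thesis using False by (auto simp: H_edge_iff F_edge_iff)
    qed
    then show ?thesis using d by (auto simp: dominating_set_def)
  qed (use d in \<open>auto simp: dominating_set_def\<close>)
  then show "dominating_set (FH_verts n) (F_edges n) S" using dom_F[OF assms] by blast
next
  assume "dominating_set (FH_verts n) (F_edges n) S"
  then show "dominating_set (FH_verts n) (H_edges n) S"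
    by (auto simp: dominating_set_def H_edges_def)
qed

lemma monom_Suc1: "monom (1::int) (Suc k) = [:0,1:] * monom 1 k"
  by (simp add: monom_Suc)

lemma pow_sum: "finite X \<Longrightarrow> (\<Sum>T\<in>Pow X. monom (1::int) (card T)) = [:1,1:] ^ card X"
proof (induction X rule: finite_induct)
  case empty
  then show ?case by (simp add: one_pCons)
next
  case (insert a X)
  have inj: "inj_on (insert a) (Pow X)" using insert.hyps(2)
    by (auto simp: inj_on_def)
  have disj: "Pow X \<inter> insert a ` Pow X = {}" using insert.hyps(2) by auto
  have "(\<Sum>T\<in>Pow (insert a X). monom (1::int) (card T))
      = (\<Sum>T\<in>Pow X. monom 1 (card T)) + (\<Sum>T\<in>insert a ` Pow X. monom 1 (card T))"
    unfolding Pow_insert using insert.hyps(1) disj by (simp add: sum.union_disjoint)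
  also have "(\<Sum>T\<in>insert a ` Pow X. monom (1::int) (card T)) = (\<Sum>T\<in>Pow X. monom 1 (card (insert a T)))"
    using inj by (simp add: sum.reindex)
  also have "\<dots> = (\<Sum>T\<in>Pow X. [:0,1:] * monom 1 (card T))"
  proof (rule sum.cong)
    fix T assume "T \<in> Pow X"
    then have "finite T" "a \<notin> T" using insert.hyps finite_subset by auto
    then show "monom (1::int) (card (insert a T)) = [:0,1:] * monom 1 (card T)"
      by (simp add: monom_Suc1)
  qed simp
  also have "\<dots> = [:0,1:] * (\<Sum>T\<in>Pow X. monom 1 (card T))"
    by (simp only: sum_distrib_left)
  finally have "(\<Sum>T\<in>Pow (insert a X). monom (1::int) (card T))
     = [:1,1:] ^ card X + [:0,1:] * [:1,1:] ^ card X" using insert.IH by simp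
  also have "\<dots> = [:1,1:] * [:1,1:] ^ card X"
    by (simp add: algebra_simps)
  finally show ?case using insert by simp
qed

definition R3 :: "nat \<Rightarrow> vtx set set" where
  "R3 n = {{A (Suc n)}, {B (Suc n)}, {A (Suc n), B (Suc n)}}"

lemma W_Suc: "W (Suc n) = insert (A (Suc n)) (insert (B (Suc n)) (W n))"
  by (auto simp: W_def)

lemma finite_W: "finite (W n)" by (simp add: W_def)

lemma notin_W: "A (Suc n) \<notin> W n" "B (Suc n) \<notin> W n" by (auto simp: W_def)

lemma finite_Good: "finite (Good n)"
  by (rule finite_subset[of _ "Pow (W n)"]) (auto simp: Good_def finite_W)

lemma R3_sum: "(\<Sum>R\<in>R3 n. monom (1::int) (card R)) = [:0,2,1:]"
  by (simp add: R3_def monom_Suc one_pCons numeral_2_eq_2)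

lemma Good_Suc: "Good (Suc n) = (\<lambda>(T,R). T \<union> R) ` (Good n \<times> R3 n)"
proof
  show "Good (Suc n) \<subseteq> (\<lambda>(T,R). T \<union> R) ` (Good n \<times> R3 n)"
  proof
    fix S assume S: "S \<in> Good (Suc n)"
    let ?T = "S \<inter> W n" and ?R = "S - W n"
    have "?T \<in> Good n"
    proof -
      have "A i \<in> ?T \<or> B i \<in> ?T" if "i \<in> {1..n}" for i
        using S that by (auto simp: Good_def W_def)
      then show ?thesis by (auto simp: Good_def)
    qed
    moreover have "?R \<in> R3 n"
    proof -
      have sub: "?R \<subseteq> {A (Suc n), B (Suc n)}" using S by (auto simp: Good_def W_Suc)
      have "A (Suc n) \<in> S \<or> B (Suc n) \<in> S" using S by (auto simp: Good_def)
      then have "A (Suc n) \<in> ?R \<or> B (Suc n) \<in> ?R" using notin_W by auto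
      with sub show ?thesis unfolding R3_def by blast
    qed
    moreover have "S = ?T \<union> ?R" by blast
    ultimately show "S \<in> (\<lambda>(T,R). T \<union> R) ` (Good n \<times> R3 n)"
      by (intro image_eqI[of _ _ "(?T, ?R)"]) simp_all
  qed
next
  show "(\<lambda>(T,R). T \<union> R) ` (Good n \<times> R3 n) \<subseteq> Good (Suc n)"
  proof clarify
    fix T R assume T: "T \<in> Good n" and R: "R \<in> R3 n"
    have "T \<union> R \<subseteq> W (Suc n)" using T R by (auto simp: Good_def R3_def W_Suc)
    moreover have "A i \<in> T \<union> R \<or> B i \<in> T \<union> R" if "i \<in> {1..Suc n}" for i
    proof (cases "i = Suc n")
      case True then show ?thesis using R by (auto simp: R3_def)
    next
      case False then have "i \<in> {1..n}" using that by auto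
      then show ?thesis using T by (auto simp: Good_def)
    qed
    ultimately show "T \<union> R \<in> Good (Suc n)" by (simp add: Good_def)
  qed
qed

lemma Good_sum: "(\<Sum>S\<in>Good n. monom (1::int) (card S)) = [:0,2,1:] ^ n"
proof (induction n)
  case 0
  have "Good 0 = {{}}" by (auto simp: Good_def W_def)
  then show ?case by simp
next
  case (Suc n)
  have inj: "inj_on (\<lambda>(T,R). T \<union> R) (Good n \<times> R3 n)"
  proof (rule inj_onI, clarify)
    fix T R T' R' assume "T \<in> Good n" "R \<in> R3 n" "T' \<in> Good n" "R' \<in> R3 n"
      and eq: "T \<union> R = T' \<union> R'"
    then have "T \<subseteq> W n" "T' \<subseteq> W n" "R \<inter> W n = {}" "R' \<inter> W n = {}"
      using notin_W by (auto simp: Good_def R3_def)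
    then have "T = (T \<union> R) \<inter> W n" "T' = (T' \<union> R') \<inter> W n"
      "R = (T \<union> R) - W n" "R' = (T' \<union> R') - W n" by blast+
    then show "T = T' \<and> R = R'" using eq by metis
  qed
  have card: "card (T \<union> R) = card T + card R" if "T \<in> Good n" "R \<in> R3 n" for T R
  proof -
    have "T \<subseteq> W n" "R \<inter> W n = {}" "finite R"
      using that notin_W by (auto simp: Good_def R3_def)
    then show ?thesis using finite_W finite_subset
      by (metis card_Un_disjoint disjoint_iff subsetD)
  qed
  have "(\<Sum>S\<in>Good (Suc n). monom (1::int) (card S))
      = (\<Sum>p\<in>Good n \<times> R3 n. monom 1 (card (case p of (T,R) \<Rightarrow> T \<union> R)))"
    unfolding Good_Suc using inj by (simp add: sum.reindex)
  also have "\<dots> = (\<Sum>(T,R)\<in>Good n \<times> R3 n. monom 1 (card T) * monom 1 (card R))"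
    by (rule sum.cong) (auto simp: card mult_monom)
  also have "\<dots> = (\<Sum>T\<in>Good n. \<Sum>R\<in>R3 n. monom 1 (card T) * monom 1 (card R))"
    by (simp add: sum.cartesian_product)
  also have "\<dots> = (\<Sum>T\<in>Good n. monom 1 (card T) * [:0,2,1:])"
    by (simp add: sum_distrib_left[symmetric] R3_sum)
  also have "\<dots> = [:0,2,1:] ^ n * [:0,2,1:]"
    by (simp only: sum_distrib_right[symmetric] Suc.IH)
  finally show ?case by (simp add: mult.commute)
qed

lemma card_W: "card (W n) = 2 * n"
proof -
  have "card (W n) = card (A ` {1..n}) + card (B ` {1..n})"
    unfolding W_def by (rule card_Un_disjoint) auto
  also have "\<dots> = n + n" by (simp add: card_image inj_on_def)
  finally show ?thesis by simp
qed

lemma dom_sets: assumes "n \<ge> 1"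
  shows "{S. dominating_set (FH_verts n) (F_edges n) S} = insert U ` Pow (W n) \<union> Good n"
proof (intro set_eqI iffI)
  fix S assume "S \<in> {S. dominating_set (FH_verts n) (F_edges n) S}"
  then have S: "S \<subseteq> insert U (W n)" "U \<in> S \<or> (\<forall>i\<in>{1..n}. A i \<in> S \<or> B i \<in> S)"
    using dom_F[OF assms] verts by auto
  show "S \<in> insert U ` Pow (W n) \<union> Good n"
  proof (cases "U \<in> S")
    case True
    then have "S = insert U (S - {U})" "S - {U} \<in> Pow (W n)" using S by auto
    then show ?thesis by blast
  next
    case False
    then show ?thesis using S by (auto simp: Good_def)
  qed
next
  fix S assume "S \<in> insert U ` Pow (W n) \<union> Good n"
  then have "S \<subseteq> insert U (W n) \<and> (U \<in> S \<or> (\<forall>i\<in>{1..n}. A i \<in> S \<or> B i \<in> S))"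
    by (auto simp: Good_def)
  then show "S \<in> {S. dominating_set (FH_verts n) (F_edges n) S}"
    using dom_F[OF assms] verts by auto
qed

lemma dom_poly_F: assumes "n \<ge> 1"
  shows "dom_poly (FH_verts n) (F_edges n) = [:0, 2, 1:] ^ n + [:0, 1:] * [:1, 1:] ^ (2 * n)"
proof -
  have disj: "insert U ` Pow (W n) \<inter> Good n = {}" using verts(2) by (auto simp: Good_def)
  have inj: "inj_on (insert U) (Pow (W n))"
  proof (rule inj_onI)
    fix x y assume "x \<in> Pow (W n)" "y \<in> Pow (W n)" "insert U x = insert U y"
    moreover have "U \<notin> x" "U \<notin> y" using calculation verts(2)[of n] by auto
    ultimately show "x = y" using insert_ident by metis
  qed
  have fin: "finite (insert U ` Pow (W n))" using finite_W by simp
  have "dom_poly (FH_verts n) (F_edges n)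
      = (\<Sum>S\<in>insert U ` Pow (W n). monom 1 (card S)) + (\<Sum>S\<in>Good n. monom 1 (card S))"
    unfolding dom_poly_def dom_sets[OF assms]
    by (rule sum.union_disjoint[OF fin finite_Good disj])
  also have "(\<Sum>S\<in>insert U ` Pow (W n). monom (1::int) (card S))
      = (\<Sum>T\<in>Pow (W n). monom 1 (card (insert U T)))"
    using inj by (simp add: sum.reindex)
  also have "\<dots> = (\<Sum>T\<in>Pow (W n). [:0,1:] * monom 1 (card T))"
  proof (rule sum.cong)
    fix T assume "T \<in> Pow (W n)"
    then have "finite T" "U \<notin> T" using finite_W finite_subset verts(2) by auto
    then show "monom (1::int) (card (insert U T)) = [:0,1:] * monom 1 (card T)"
      by (simp add: monom_Suc1)
  qed simp
  also have "\<dots> = [:0,1:] * [:1,1:] ^ (2 * n)"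
    by (simp only: sum_distrib_left[symmetric] pow_sum[OF finite_W] card_W)
  finally show ?thesis by (simp only: Good_sum add.commute)
qed

lemma H_edges_doubleton: "e \<in> H_edges n \<Longrightarrow> \<exists>x\<in>FH_verts n. \<exists>y\<in>FH_verts n. e = {x, y}"
proof -
  assume "e \<in> H_edges n"
  then consider (F) i where "i \<in> {1..n}" "e = {U, A i} \<or> e = {U, B i} \<or> e = {A i, B i}"
    | (BB) i j where "1 \<le> i" "i < j" "j \<le> n" "e = {B i, B j}"
    unfolding H_edges_def F_edges_def by blast
  then show ?thesis
  proof cases
    case F
    then have "U \<in> FH_verts n" "A i \<in> FH_verts n" "B i \<in> FH_verts n"
      by (auto simp: FH_verts_def)
    then show ?thesis using F(2) by blast
  next
    case BB
    then have "B i \<in> FH_verts n" "B j \<in> FH_verts n" by (auto simp: FH_verts_def)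
    then show ?thesis using BB(4) by blast
  qed
qed

lemma not_iso: assumes "n \<ge> 2"
  shows "\<not> graph_iso (FH_verts n) (H_edges n) (FH_verts n) (F_edges n)"
proof
  assume "graph_iso (FH_verts n) (H_edges n) (FH_verts n) (F_edges n)"
  then obtain f where bij: "bij_betw f (FH_verts n) (FH_verts n)"
    and pres: "\<forall>x\<in>FH_verts n. \<forall>y\<in>FH_verts n. {x, y} \<in> H_edges n \<longleftrightarrow> {f x, f y} \<in> F_edges n"
    unfolding graph_iso_def by blast
  have finV: "finite (FH_verts n)" by (simp add: FH_verts_def)
  have finH: "finite (H_edges n)"
  proof (rule finite_subset[of _ "Pow (FH_verts n)"])
    show "H_edges n \<subseteq> Pow (FH_verts n)"
    proof
      fix e assume "e \<in> H_edges n"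
      then obtain x y where "x \<in> FH_verts n" "y \<in> FH_verts n" "e = {x, y}"
        using H_edges_doubleton by blast
      then show "e \<in> Pow (FH_verts n)" by simp
    qed
  qed (use finV in simp)
  have inj: "inj_on (\<lambda>e. f ` e) (H_edges n)"
  proof (rule inj_onI)
    fix e e' assume e: "e \<in> H_edges n" and e': "e' \<in> H_edges n" and eq: "f ` e = f ` e'"
    have "e \<subseteq> FH_verts n" "e' \<subseteq> FH_verts n"
      using H_edges_doubleton[OF e] H_edges_doubleton[OF e'] by auto
    then show "e = e'" using eq bij_betw_imp_inj_on[OF bij] inj_on_image_eq_iff by metis
  qed
  have maps: "(\<lambda>e. f ` e) ` H_edges n \<subseteq> F_edges n"
  proof clarify
    fix e assume "e \<in> H_edges n"
    then obtain x y where xy: "x \<in> FH_verts n" "y \<in> FH_verts n" "e = {x, y}"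
      using H_edges_doubleton by blast
    then show "f ` e \<in> F_edges n" using pres \<open>e \<in> H_edges n\<close> by auto
  qed
  have "card (H_edges n) \<le> card (F_edges n)"
    using card_inj_on_le[OF inj maps] by (simp add: F_edges_def)
  moreover have "F_edges n \<subset> H_edges n"
  proof
    show "F_edges n \<subseteq> H_edges n" by (auto simp: H_edges_def)
    have "{B 1, B 2} \<in> {{B i, B j} | i j. 1 \<le> i \<and> i < j \<and> j \<le> n}"
      using assms by (intro CollectI exI[of _ 1] exI[of _ 2]) simp
    then have "{B 1, B 2} \<in> H_edges n" unfolding H_edges_def by blast
    moreover have "{B 1, B 2} \<notin> F_edges n" by (simp add: F_edge_iff)
    ultimately show "F_edges n \<noteq> H_edges n" by blast
  qed
  then have "card (F_edges n) < card (H_edges n)" using finH psubset_card_mono by blast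
  ultimately show False by simp
qed

theorem mainTheorem7:
  fixes n :: nat
  assumes "n \<ge> 2"
  shows "\<not> graph_iso (FH_verts n) (H_edges n) (FH_verts n) (F_edges n)
    \<and> dom_poly (FH_verts n) (H_edges n) = dom_poly (FH_verts n) (F_edges n)
    \<and> dom_poly (FH_verts n) (F_edges n) = [:0, 2, 1:] ^ n + [:0, 1:] * [:1, 1:] ^ (2 * n)"
proof (intro conjI)
  show "\<not> graph_iso (FH_verts n) (H_edges n) (FH_verts n) (F_edges n)" using not_iso[OF assms] .
  have n1: "n \<ge> 1" using assms by simp
  show "dom_poly (FH_verts n) (H_edges n) = dom_poly (FH_verts n) (F_edges n)"
  proof -
    have "{S. dominating_set (FH_verts n) (H_edges n) S} = {S. dominating_set (FH_verts n) (F_edges n) S}"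
      using dom_H[OF n1] by blast
    then show ?thesis unfolding dom_poly_def by (simp only:)
  qed
  show "dom_poly (FH_verts n) (F_edges n) = [:0, 2, 1:] ^ n + [:0, 1:] * [:1, 1:] ^ (2 * n)"
    using dom_poly_F[OF n1] .
qed

end
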